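(* Let $k,n$ be positive integers and suppose there exist complex $k\times n$ matrices $A_1,\dots,A_k$ such that $A_iA_i^t=I_k$ for every $i\in[k]$ and $A_iA_j^t=-A_jA_i^t$ for all distinct $i,j\in[k]$. Then there exists an anticommuting family $e_1,\dots,e_k\in\mathbb{C}^{(n+2k)\times(n+2k)}$ such that $\mathrm{rk}(e_i^2)=k$ for every $i$, $e_1^2=e_2^2=\dots=e_k^2$, and $e_i^3=0$ for every $i$.
   Context: A family $e_1,\dots,e_k$ of complex square matrices is called anticommuting if $e_ie_j=-e_je_i$ for all distinct $i,j$. $A^t$ denotes the transpose; $\mathrm{rk}$ is matrix rank. *)

theory Defs
  imports "Jordan_Normal_Form.DL_Rank"
begin

end

theory Submission
  imports Defs
begin
definition P1 :: "nat \<Rightarrow> nat \<Rightarrow> complex mat" where "P1 k n = mat (n+2*k) k (\<lambda>(r,c). if r = c then 1 else 0)"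
definition Q2 :: "nat \<Rightarrow> nat \<Rightarrow> complex mat" where "Q2 k n = mat n (n+2*k) (\<lambda>(r,c). if c = r+k then 1 else 0)"
definition P2 :: "nat \<Rightarrow> nat \<Rightarrow> complex mat" where "P2 k n = mat (n+2*k) n (\<lambda>(r,c). if r = c+k then 1 else 0)"
definition Q3 :: "nat \<Rightarrow> nat \<Rightarrow> complex mat" where "Q3 k n = mat k (n+2*k) (\<lambda>(r,c). if c = r+k+n then 1 else 0)"
definition E :: "nat \<Rightarrow> nat \<Rightarrow> complex mat" where "E k n = mat (n+2*k) (n+2*k) (\<lambda>(r,c). if c = r+k+n then 1 else 0)"

lemma sum_if_eq: "finite S \<Longrightarrow> (\<Sum>l\<in>S. (if l = a then (1::complex) else 0) * (if l = b then 1 else 0)) = (if a = b \<and> a \<in> S then 1 else 0)"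
proof -
  assume "finite S"
  have "(\<Sum>l\<in>S. (if l = a then (1::complex) else 0) * (if l = b then 1 else 0)) = (\<Sum>l\<in>S. if a = l then (if a = b then 1 else 0) else 0)"
    by (rule sum.cong) auto
  also have "\<dots> = (if a = b \<and> a \<in> S then 1 else 0)" using \<open>finite S\<close> by (simp add: sum.delta)
  finally show ?thesis .
qed

lemma sum_if_eq2: "finite S \<Longrightarrow> (\<Sum>l\<in>S. (if a = l then (1::complex) else 0) * f l) = (if a \<in> S then f a else 0)"
proof -
  assume "finite S"
  have "(\<Sum>l\<in>S. (if a = l then (1::complex) else 0) * f l) = (\<Sum>l\<in>S. if a = l then f a else 0)"
    by (rule sum.cong) auto
  then show ?thesis using \<open>finite S\<close> by (simp add: sum.delta)
qed

lemma Q2P1: "Q2 k n * P1 k n = 0\<^sub>m n k"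
  by (rule eq_matI, auto simp: Q2_def P1_def scalar_prod_def sum_if_eq sum_if_eq2)
lemma Q2P2: "Q2 k n * P2 k n = 1\<^sub>m n"
  by (rule eq_matI, auto simp: Q2_def P2_def scalar_prod_def sum_if_eq sum_if_eq2)
lemma Q3P1: "Q3 k n * P1 k n = 0\<^sub>m k k"
  by (rule eq_matI, auto simp: Q3_def P1_def scalar_prod_def sum_if_eq sum_if_eq2)
lemma Q3P2: "Q3 k n * P2 k n = 0\<^sub>m k n"
  by (rule eq_matI, auto simp: Q3_def P2_def scalar_prod_def sum_if_eq sum_if_eq2)
lemma P1Q3: "P1 k n * Q3 k n = E k n"
  by (rule eq_matI, auto simp: Q3_def P1_def E_def scalar_prod_def sum_if_eq sum_if_eq2)

lemma carr: "P1 k n \<in> carrier_mat (n+2*k) k" "Q2 k n \<in> carrier_mat n (n+2*k)"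
  "P2 k n \<in> carrier_mat (n+2*k) n" "Q3 k n \<in> carrier_mat k (n+2*k)" "E k n \<in> carrier_mat (n+2*k) (n+2*k)"
  by (auto simp: P1_def Q2_def P2_def Q3_def E_def)

lemma Q2P1': "X \<in> carrier_mat k m \<Longrightarrow> Q2 k n * (P1 k n * X) = 0\<^sub>m n m"
  by (subst assoc_mult_mat[symmetric, OF carr(2) carr(1)], auto simp: Q2P1)
lemma Q2P2': "X \<in> carrier_mat n m \<Longrightarrow> Q2 k n * (P2 k n * X) = X"
  by (subst assoc_mult_mat[symmetric, OF carr(2) carr(3)], auto simp: Q2P2)
lemma Q3P1': "X \<in> carrier_mat k m \<Longrightarrow> Q3 k n * (P1 k n * X) = 0\<^sub>m k m"
  by (subst assoc_mult_mat[symmetric, OF carr(4) carr(1)], auto simp: Q3P1)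
lemma Q3P2': "X \<in> carrier_mat n m \<Longrightarrow> Q3 k n * (P2 k n * X) = 0\<^sub>m k m"
  by (subst assoc_mult_mat[symmetric, OF carr(4) carr(3)], auto simp: Q3P2)

definition f :: "nat \<Rightarrow> nat \<Rightarrow> complex mat \<Rightarrow> complex mat" where
  "f k n M = P1 k n * (M * Q2 k n) + P2 k n * (M\<^sup>T * Q3 k n)"

lemma f_carr: "M \<in> carrier_mat k n \<Longrightarrow> f k n M \<in> carrier_mat (n+2*k) (n+2*k)"
proof -
  assume M: "M \<in> carrier_mat k n"
  have "M * Q2 k n \<in> carrier_mat k (n+2*k)" "M\<^sup>T * Q3 k n \<in> carrier_mat n (n+2*k)"
    using M carr by auto
  then show ?thesis unfolding f_def using carr by (meson add_carrier_mat mult_carrier_mat)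
qed

lemma chain: "P \<in> carrier_mat a b \<Longrightarrow> M \<in> carrier_mat b c \<Longrightarrow> Q \<in> carrier_mat c d \<Longrightarrow> Y \<in> carrier_mat d e
  \<Longrightarrow> (P * (M * Q)) * Y = P * (M * (Q * Y))"
  by (subst assoc_mult_mat[of _ a b _ d _ e], auto intro: mult_carrier_mat)

lemma f_mult: assumes M: "M \<in> carrier_mat k n" and M': "M' \<in> carrier_mat k n"
  shows "f k n M * f k n M' = P1 k n * ((M * M'\<^sup>T) * Q3 k n)"
proof -
  note c = carr[of k n]
  let ?N = "n+2*k"
  have a1: "M * Q2 k n \<in> carrier_mat k ?N" "M\<^sup>T * Q3 k n \<in> carrier_mat n ?N"
     "M' * Q2 k n \<in> carrier_mat k ?N" "M'\<^sup>T * Q3 k n \<in> carrier_mat n ?N"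
    using M M' c by auto
  have a2: "P1 k n * (M * Q2 k n) \<in> carrier_mat ?N ?N" "P2 k n * (M\<^sup>T * Q3 k n) \<in> carrier_mat ?N ?N"
     "P1 k n * (M' * Q2 k n) \<in> carrier_mat ?N ?N" "P2 k n * (M'\<^sup>T * Q3 k n) \<in> carrier_mat ?N ?N"
    using a1 c by auto
  have t1: "(P1 k n * (M * Q2 k n)) * (P1 k n * (M' * Q2 k n)) = 0\<^sub>m ?N ?N"
    using M M' c by (simp add: chain[OF c(1) M c(2) a2(3)] Q2P1'[OF a1(3)])
  have t2: "(P1 k n * (M * Q2 k n)) * (P2 k n * (M'\<^sup>T * Q3 k n)) = P1 k n * ((M * M'\<^sup>T) * Q3 k n)"
    by (simp only: chain[OF c(1) M c(2) a2(4)] Q2P2'[OF a1(4)] assoc_mult_mat[OF M transpose_carrier_mat[THEN iffD2, OF M'] c(4)])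
  have t3: "(P2 k n * (M\<^sup>T * Q3 k n)) * (P1 k n * (M' * Q2 k n)) = 0\<^sub>m ?N ?N"
    using M M' c by (simp add: chain[OF c(3) transpose_carrier_mat[THEN iffD2, OF M] c(4) a2(3)] Q3P1'[OF a1(3)])
  have t4: "(P2 k n * (M\<^sup>T * Q3 k n)) * (P2 k n * (M'\<^sup>T * Q3 k n)) = 0\<^sub>m ?N ?N"
    using M M' c by (simp add: chain[OF c(3) transpose_carrier_mat[THEN iffD2, OF M] c(4) a2(4)] Q3P2'[OF a1(4)])
  have "f k n M * f k n M' = (P1 k n * (M * Q2 k n)) * (P1 k n * (M' * Q2 k n)) + (P2 k n * (M\<^sup>T * Q3 k n)) * (P1 k n * (M' * Q2 k n))
     + ((P1 k n * (M * Q2 k n)) * (P2 k n * (M'\<^sup>T * Q3 k n)) + (P2 k n * (M\<^sup>T * Q3 k n)) * (P2 k n * (M'\<^sup>T * Q3 k n)))"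
    unfolding f_def using a2
    by (simp add: add_mult_distrib_mat[of _ ?N ?N] mult_add_distrib_mat[of _ ?N ?N])
  also have "\<dots> = P1 k n * ((M * M'\<^sup>T) * Q3 k n)"
    unfolding t1 t2 t3 t4 using c M M' by simp
  finally show ?thesis .
qed

lemma col_E: "c < n+2*k \<Longrightarrow> col (E k n) c = (if k+n \<le> c then unit_vec (n+2*k) (c-k-n) else 0\<^sub>v (n+2*k))"
  by (rule eq_vecI, auto simp: E_def)

lemma rank_E: "vec_space.rank (n+2*k) (E k n) = k"
proof -
  let ?N = "n+2*k"
  interpret V: vec_space "TYPE(complex)" ?N .
  define U :: "complex vec set" where "U = unit_vec ?N ` {..<k}"
  have sub1: "set (cols (E k n)) \<subseteq> insert (0\<^sub>v ?N) U"
  proof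
    fix x assume "x \<in> set (cols (E k n))"
    then obtain c where c: "c < ?N" "x = col (E k n) c" unfolding cols_def by (auto simp: E_def)
    show "x \<in> insert (0\<^sub>v ?N) U"
    proof (cases "k+n \<le> c")
      case True
      then have "c - k - n < k" using c by auto
      then show ?thesis using c True col_E[OF c(1)] unfolding U_def by auto
    qed (use c col_E[OF c(1)] in auto)
  qed
  have sub2: "U \<subseteq> set (cols (E k n))"
  proof
    fix x assume "x \<in> U"
    then obtain r where r: "r < k" "x = unit_vec ?N r" unfolding U_def by auto
    have "col (E k n) (r+k+n) = x" using r col_E[of "r+k+n" n k] by auto
    moreover have "r+k+n < dim_col (E k n)" using r by (auto simp: E_def)
    ultimately show "x \<in> set (cols (E k n))" unfolding cols_def by (metis in_set_conv_nth length_map length_upt minus_nat.diff_0 nth_map_upt add_0)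
  qed
  have li0: "V.lin_indpt (set (unit_vecs ?N))" using V.unit_vecs_basis unfolding V.basis_def by auto
  have li: "V.lin_indpt U"
    by (rule V.subset_li_is_li[OF li0]) (auto simp: U_def unit_vecs_def)
  have max: "maximal U (\<lambda>T. T \<subseteq> set (cols (E k n)) \<and> V.lin_indpt T)"
    unfolding maximal_def
  proof (intro conjI allI impI)
    show "U \<subseteq> set (cols (E k n))" by (rule sub2)
    show "V.lin_indpt U" by (rule li)
    fix B assume B: "U \<subseteq> B \<and> B \<subseteq> set (cols (E k n)) \<and> V.lin_indpt B"
    show "B = U"
    proof (rule ccontr)
      assume "B \<noteq> U"
      then have "0\<^sub>v ?N \<in> B" using B sub1 by blast
      then have "V.lin_dep B" by (intro V.zero_lin_dep) (auto simp: set_eq_iff intro: exI[of _ "1::complex"])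
      then show False using B by auto
    qed
  qed
  have "V.rank (E k n) = card U"
    by (rule V.rank_card_indpt[OF _ max]) (auto simp: E_def)
  also have "card U = k" unfolding U_def by (subst card_image) (auto simp: inj_on_def)
  finally show ?thesis .
qed

lemma f_sq: assumes M: "M \<in> carrier_mat k n" and MM: "M * M\<^sup>T = 1\<^sub>m k"
  shows "f k n M ^\<^sub>m 2 = E k n"
proof -
  have "f k n M ^\<^sub>m 2 = f k n M * f k n M"
    using f_carr[OF M] by (simp add: numeral_2_eq_2)
  also have "\<dots> = P1 k n * (1\<^sub>m k * Q3 k n)" using f_mult[OF M M] MM by simp
  also have "\<dots> = E k n" using carr[of k n] by (simp add: P1Q3)
  finally show ?thesis .
qed

lemma f_cube: assumes M: "M \<in> carrier_mat k n" and MM: "M * M\<^sup>T = 1\<^sub>m k"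
  shows "f k n M ^\<^sub>m 3 = 0\<^sub>m (n+2*k) (n+2*k)"
proof -
  note c = carr[of k n]
  have a1: "M * Q2 k n \<in> carrier_mat k (n+2*k)" "M\<^sup>T * Q3 k n \<in> carrier_mat n (n+2*k)"
    using M c by auto
  have a2: "P1 k n * (M * Q2 k n) \<in> carrier_mat (n+2*k) (n+2*k)" "P2 k n * (M\<^sup>T * Q3 k n) \<in> carrier_mat (n+2*k) (n+2*k)"
    using a1 c by auto
  have "f k n M ^\<^sub>m 3 = f k n M ^\<^sub>m 2 * f k n M"
    using pow_mat.simps(2)[of "f k n M" 2] by (simp add: numeral_3_eq_3 numeral_2_eq_2)
  also have "\<dots> = (P1 k n * Q3 k n) * f k n M" using f_sq[OF M MM] P1Q3 by simp
  also have "\<dots> = P1 k n * (Q3 k n * f k n M)"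
    by (rule assoc_mult_mat[OF c(1) c(4) f_carr[OF M]])
  also have "Q3 k n * f k n M = Q3 k n * (P1 k n * (M * Q2 k n)) + Q3 k n * (P2 k n * (M\<^sup>T * Q3 k n))"
    unfolding f_def by (rule mult_add_distrib_mat[OF c(4) a2(1) a2(2)])
  also have "\<dots> = 0\<^sub>m k (n+2*k)" using Q3P1'[OF a1(1)] Q3P2'[OF a1(2)] by simp
  finally show ?thesis using c by simp
qed

theorem proposition6p2:
  fixes k n :: nat and A :: "nat \<Rightarrow> complex mat"
  assumes "k > 0" and "n > 0"
    and "\<forall>i<k. A i \<in> carrier_mat k n"
    and "\<forall>i<k. A i * (A i)\<^sup>T = 1\<^sub>m k"
    and "\<forall>i<k. \<forall>j<k. i \<noteq> j \<longrightarrow> A i * (A j)\<^sup>T = - (A j * (A i)\<^sup>T)"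
  shows "\<exists>e :: nat \<Rightarrow> complex mat.
           (\<forall>i<k. e i \<in> carrier_mat (n + 2*k) (n + 2*k)) \<and>
           (\<forall>i<k. \<forall>j<k. i \<noteq> j \<longrightarrow> e i * e j = - (e j * e i)) \<and>
           (\<forall>i<k. vec_space.rank (n + 2*k) (e i ^\<^sub>m 2) = k) \<and>
           (\<forall>i<k. \<forall>j<k. e i ^\<^sub>m 2 = e j ^\<^sub>m 2) \<and>
           (\<forall>i<k. e i ^\<^sub>m 3 = 0\<^sub>m (n + 2*k) (n + 2*k))"
proof (intro exI[of _ "\<lambda>i. f k n (A i)"] conjI allI impI)
  fix i assume i: "i < k"
  show "f k n (A i) \<in> carrier_mat (n + 2*k) (n + 2*k)" using f_carr assms(3) i by blast
  show "vec_space.rank (n + 2*k) (f k n (A i) ^\<^sub>m 2) = k"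
    using f_sq[of "A i" k n] assms(3,4) i rank_E by simp
  show "f k n (A i) ^\<^sub>m 3 = 0\<^sub>m (n + 2*k) (n + 2*k)"
    using f_cube[of "A i" k n] assms(3,4) i by simp
next
  fix i j assume i: "i < k" and j: "j < k"
  show "f k n (A i) ^\<^sub>m 2 = f k n (A j) ^\<^sub>m 2"
    using f_sq[of "A i" k n] f_sq[of "A j" k n] assms(3,4) i j by simp
  assume ij: "i \<noteq> j"
  have Ai: "A i \<in> carrier_mat k n" and Aj: "A j \<in> carrier_mat k n" using assms(3) i j by auto
  have eq: "A i * (A j)\<^sup>T = - (A j * (A i)\<^sup>T)" using assms(5) i j ij by blast
  have "f k n (A i) * f k n (A j) = P1 k n * ((A i * (A j)\<^sup>T) * Q3 k n)" by (rule f_mult[OF Ai Aj])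
  also have "\<dots> = P1 k n * ((- (A j * (A i)\<^sup>T)) * Q3 k n)" by (simp only: eq)
  also have "\<dots> = - (P1 k n * ((A j * (A i)\<^sup>T) * Q3 k n))"
    using Ai Aj carr[of k n] by simp
  also have "\<dots> = - (f k n (A j) * f k n (A i))" by (simp only: f_mult[OF Aj Ai])
  finally show "f k n (A i) * f k n (A j) = - (f k n (A j) * f k n (A i))" .
qed
end
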